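(* Let $d$ and $k$ be integers with $1\le k\le d-1$, let $\Lambda\subseteq\mathbb{R}^d$ be a $d$-dimensional lattice with $\lambda_d(\Lambda,B^d)\le1$, and write $\lambda_i=\lambda_i(\Lambda,B^d)$ for $i\in\{1,\dots,d\}$. Let \[\alpha=\min_{d-k+1\le i\le d}(\lambda_{d-i+1}\cdots\lambda_d)^{-1/(i-1)},\] and let $q\in\{d-k+1,\dots,d\}$ be an integer with $\alpha=(\lambda_{d-q+1}\cdots\lambda_d)^{-1/(q-1)}$. If $q\ge d-k+2$, then: (i) $1/\lambda_i\le\alpha$ for every $i\in\{d-q+1,\dots,d\}$; (ii) $(\lambda_{d-i+2}\cdots\lambda_d)^{(q-i+1)/(i-2)}\le\lambda_{d-q+1}\cdots\lambda_{d-i+1}$ for every $i\in\{3,\dots,d-k+2\}$.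
   Context: $B^d$ is the closed unit Euclidean ball in $\mathbb{R}^d$ centered at the origin. A $d$-dimensional lattice is the set of all integer linear combinations of $d$ linearly independent vectors of $\mathbb{R}^d$. For a lattice $\Lambda$ and a compact convex body $K$ symmetric about the origin, the $i$th successive minimum is $\lambda_i(\Lambda,K)=\inf\{\lambda\in\mathbb{R}:\dim(\Lambda\cap(\lambda K))\ge i\}$; one has $\lambda_1\le\cdots\le\lambda_d$. *)

theory Defs
  imports "HOL-Analysis.Analysis"
begin

definition is_lattice :: "(real^'n) set \<Rightarrow> bool" where
  "is_lattice L \<longleftrightarrow> (\<exists>b :: 'n \<Rightarrow> real^'n. inj b \<and> independent (range b) \<and>
      L = {(\<Sum>j\<in>UNIV. of_int (c j) *\<^sub>R b j) | c :: 'n \<Rightarrow> int. True})"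

definition succ_min :: "(real^'n) set \<Rightarrow> (real^'n) set \<Rightarrow> nat \<Rightarrow> real" where
  "succ_min L K i = Inf {lam :: real. lam > 0 \<and> dim (L \<inter> ((\<lambda>x. lam *\<^sub>R x) ` K)) \<ge> i}"

end

theory Submission
  imports Defs
begin

lemma lattice_discrete:
  assumes "is_lattice (L :: (real^'n) set)"
  obtains dl where "dl > 0" "\<And>x. x \<in> L \<Longrightarrow> x \<noteq> 0 \<Longrightarrow> dl \<le> norm x"
proof -
  obtain b :: "'n \<Rightarrow> real^'n" where inj: "inj b" and ind: "independent (range b)"
    and L: "L = {(\<Sum>j\<in>UNIV. of_int (c j) *\<^sub>R b j) | c :: 'n \<Rightarrow> int. True}"
    using assms unfolding is_lattice_def by blast
  define f where "f = (\<lambda>c::real^'n. \<Sum>j\<in>UNIV. c$j *\<^sub>R b j)"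
  have lin: "linear f" unfolding f_def
    by (auto simp: linear_iff scaleR_add_left sum.distrib scaleR_sum_right)
  have z: "x = 0" if "f x = 0" for x
  proof -
    define c where "c = (\<lambda>v. x $ (inv b v))"
    have "(\<Sum>v\<in>range b. c v *\<^sub>R v) = (\<Sum>j\<in>UNIV. c (b j) *\<^sub>R b j)"
      by (subst sum.reindex[OF inj]) auto
    also have "\<dots> = f x" unfolding f_def c_def using inj by simp
    finally have "(\<Sum>v\<in>range b. c v *\<^sub>R v) = 0" using that by simp
    hence "\<forall>v\<in>range b. c v = 0" using ind unfolding independent_explicit by blast
    thus ?thesis unfolding c_def using inj by (simp add: vec_eq_iff)
  qed
  have injf: "inj f"
  proof (rule injI)
    fix x y assume "f x = f y"
    hence "f (x - y) = 0" using lin by (simp add: linear_diff)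
    thus "x = y" using z[of "x - y"] by simp
  qed
  obtain B where B: "B > 0" "\<And>x. B * norm x \<le> norm (f x)"
    using linear_inj_bounded_below_pos[OF lin injf] by blast
  show thesis
  proof (rule that[OF B(1)])
    fix x assume "x \<in> L" "x \<noteq> 0"
    then obtain c where x: "x = (\<Sum>j\<in>UNIV. of_int (c j) *\<^sub>R b j)" using L by blast
    define v where "v = (\<chi> j. (of_int (c j) :: real))"
    have fv: "f v = x" unfolding f_def v_def x by simp
    have "v \<noteq> 0" using fv \<open>x \<noteq> 0\<close> lin linear_0 by blast
    then obtain j where "v $ j \<noteq> 0" by (auto simp: vec_eq_iff)
    hence "c j \<noteq> 0" unfolding v_def by simp
    hence "1 \<le> \<bar>v $ j\<bar>" unfolding v_def by simp
    also have "\<dots> \<le> norm v" by (rule component_le_norm_cart)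
    finally have "B \<le> B * norm v" using B(1) by simp
    also have "\<dots> \<le> norm x" using B(2)[of v] fv by simp
    finally show "B \<le> norm x" .
  qed
qed

lemma lattice_big:
  assumes "is_lattice (L :: (real^'n) set)"
  obtains R where "R > 0" "dim (L \<inter> ((\<lambda>x. R *\<^sub>R x) ` cball 0 1)) \<ge> CARD('n)"
proof -
  obtain b :: "'n \<Rightarrow> real^'n" where inj: "inj b" and ind: "independent (range b)"
    and L: "L = {(\<Sum>j\<in>UNIV. of_int (c j) *\<^sub>R b j) | c :: 'n \<Rightarrow> int. True}"
    using assms unfolding is_lattice_def by blast
  define R where "R = 1 + (\<Sum>j\<in>UNIV. norm (b j))"
  have R0: "R > 0"
    unfolding R_def using sum_nonneg[of UNIV "\<lambda>j. norm (b j)"] by force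
  have Rj: "norm (b j) \<le> R" for j
  proof -
    have "norm (b j) \<le> (\<Sum>j\<in>UNIV. norm (b j))" by (rule member_le_sum) auto
    thus ?thesis unfolding R_def by simp
  qed
  note R = R0 Rj
  have sub: "range b \<subseteq> L \<inter> ((\<lambda>x. R *\<^sub>R x) ` cball 0 1)"
  proof
    fix y assume "y \<in> range b"
    then obtain j where y: "y = b j" by auto
    have "(\<Sum>m\<in>UNIV. of_int (if m = j then 1 else 0) *\<^sub>R b m) = (\<Sum>m\<in>UNIV. if m = j then b j else 0)"
      by (rule sum.cong) auto
    hence "y = (\<Sum>m\<in>UNIV. of_int (if m = j then 1 else 0) *\<^sub>R b m)"
      unfolding y by simp
    hence "y \<in> L" unfolding L by (intro CollectI exI[of _ "\<lambda>m. if m = j then 1 else 0"]) simp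
    moreover have "y = R *\<^sub>R (inverse R *\<^sub>R y)" using R by simp
    moreover have "inverse R *\<^sub>R y \<in> cball 0 1" using R y
      by (simp add: divide_simps)
    ultimately show "y \<in> L \<inter> ((\<lambda>x. R *\<^sub>R x) ` cball 0 1)" by blast
  qed
  have "CARD('n) = card (range b)" using inj by (simp add: card_image)
  also have "\<dots> \<le> dim (L \<inter> ((\<lambda>x. R *\<^sub>R x) ` cball 0 1))"
    by (rule independent_card_le_dim[OF sub ind])
  finally show thesis using that R by blast
qed

lemma succ_min_props:
  assumes "is_lattice (L :: (real^'n) set)" "1 \<le> i" "i \<le> j" "j \<le> CARD('n)"
  shows "0 < succ_min L (cball 0 1) i" "succ_min L (cball 0 1) i \<le> succ_min L (cball 0 1) j"
proof -
  define S where "S = (\<lambda>i. {lam :: real. lam > 0 \<and> dim (L \<inter> ((\<lambda>x. lam *\<^sub>R x) ` cball 0 1)) \<ge> i})"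
  have sm: "succ_min L (cball 0 1) m = Inf (S m)" for m unfolding S_def succ_min_def by simp
  obtain dl where dl: "dl > 0" "\<And>x. x \<in> L \<Longrightarrow> x \<noteq> 0 \<Longrightarrow> dl \<le> norm x"
    using lattice_discrete[OF assms(1)] by blast
  obtain R where R: "R > 0" "dim (L \<inter> ((\<lambda>x. R *\<^sub>R x) ` cball 0 1)) \<ge> CARD('n)"
    using lattice_big[OF assms(1)] by blast
  have Rj: "R \<in> S j" using R assms(4) unfolding S_def by auto
  have sub: "S j \<subseteq> S i" using assms(3) unfolding S_def by auto
  have low: "dl \<le> lam" if "lam \<in> S i" for lam
  proof -
    have lp: "lam > 0" and dm: "dim (L \<inter> ((\<lambda>x. lam *\<^sub>R x) ` cball 0 1)) \<ge> i"
      using that unfolding S_def by auto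
    have "\<not> (L \<inter> ((\<lambda>x. lam *\<^sub>R x) ` cball 0 1)) \<subseteq> {0}"
      proof
      assume "L \<inter> ((\<lambda>x. lam *\<^sub>R x) ` cball 0 1) \<subseteq> {0}"
      hence "dim (L \<inter> ((\<lambda>x. lam *\<^sub>R x) ` cball 0 1)) = 0" by simp
      thus False using dm assms(2) by linarith
    qed
    then obtain x where "x \<in> L" "x \<noteq> 0" "x \<in> (\<lambda>x. lam *\<^sub>R x) ` cball 0 1" by blast
    then obtain y where y: "x = lam *\<^sub>R y" "norm y \<le> 1" by auto
    have "dl \<le> norm x" using dl \<open>x \<in> L\<close> \<open>x \<noteq> 0\<close> by blast
    also have "\<dots> = lam * norm y" using y lp by simp
    also have "\<dots> \<le> lam" using y lp by (simp add: mult_left_le)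
    finally show ?thesis .
  qed
  have ne: "S i \<noteq> {}" using Rj sub by blast
  have "dl \<le> Inf (S i)" by (rule cInf_greatest[OF ne]) (rule low)
  thus "0 < succ_min L (cball 0 1) i" using dl sm by simp
  have bdd: "bdd_below (S i)" using low by (auto simp: bdd_below_def)
  show "succ_min L (cball 0 1) i \<le> succ_min L (cball 0 1) j"
    unfolding sm by (rule cInf_superset_mono[OF _ bdd sub]) (use Rj in blast)
qed

theorem lemma2:
  fixes L :: "(real^'n) set" and k q :: nat and alpha :: real
  defines "d \<equiv> CARD('n)"
  defines "lam \<equiv> (\<lambda>i. succ_min L (cball 0 1) i)"
  defines "alpha \<equiv> Min ((\<lambda>i. (\<Prod>j\<in>{d-i+1..d}. lam j) powr (- 1 / (real i - 1))) ` {d-k+1..d})"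
  assumes "1 \<le> k" and "k \<le> d - 1"
    and "is_lattice L"
    and "lam d \<le> 1"
    and "q \<in> {d-k+1..d}"
    and "alpha = (\<Prod>j\<in>{d-q+1..d}. lam j) powr (- 1 / (real q - 1))"
    and "q \<ge> d - k + 2"
  shows "(\<forall>i\<in>{d-q+1..d}. 1 / lam i \<le> alpha) \<and>
         (\<forall>i\<in>{3..d-k+2}. (\<Prod>j\<in>{d-i+2..d}. lam j) powr ((real q - real i + 1) / (real i - 2))
              \<le> (\<Prod>j\<in>{d-q+1..d-i+1}. lam j))"
proof -
  have lat: "is_lattice L" by fact
  have d2: "d \<ge> 2" using assms(4,5) by linarith
  have qd: "q \<le> d" and q3: "q \<ge> 3" using assms(8,10) assms(4,5) by auto
  have pos: "0 < lam j" if "1 \<le> j" "j \<le> d" for j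
    using succ_min_props(1)[OF lat that(1) order_refl] that(2) unfolding lam_def d_def by blast
  have mono: "lam i \<le> lam j" if "1 \<le> i" "i \<le> j" "j \<le> d" for i j
    using succ_min_props(2)[OF lat that(1,2)] that(3) unfolding lam_def d_def by blast
  define P where "P m = (\<Prod>j\<in>{d-m+1..d}. lam j)" for m
  have Ppos: "0 < P m" for m unfolding P_def by (rule prod_pos) (auto intro!: pos)
  define a where "a = lam (d-q+1)"
  have a0: "a > 0" unfolding a_def using qd q3 by (intro pos) auto
  have PqS: "P q = a * P (q-1)"
  proof -
    have "P q = lam (d-q+1) * (\<Prod>j\<in>{Suc (d-q+1)..d}. lam j)"
      unfolding P_def using qd q3 by (intro prod.atLeast_Suc_atMost) auto
    also have "Suc (d-q+1) = d - (q-1) + 1" using qd q3 by auto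
    finally show ?thesis unfolding P_def a_def by simp
  qed
  have alpha_eq: "alpha = P q powr (-1/(real q - 1))" using assms(9) unfolding P_def by simp
  have alpha_le: "alpha \<le> P (q-1) powr (-1/(real q - 2))"
  proof -
    have "q - 1 \<in> {d-k+1..d}" using assms(10) qd by auto
    hence "alpha \<le> (\<lambda>i. (\<Prod>j\<in>{d-i+1..d}. lam j) powr (- 1 / (real i - 1))) (q-1)"
      unfolding alpha_def by (intro Min_le) auto
    also have "real (q-1) - 1 = real q - 2" using q3 by auto
    finally show ?thesis unfolding P_def by simp
  qed
  have alpha0: "alpha > 0" using alpha_eq Ppos[of q] by simp
  define A where "A = ln a"
  define p where "p = ln (P (q-1))"
  have lnal: "ln alpha = -1/(real q - 1) * (A + p)"
    unfolding alpha_eq PqS A_def p_def using a0 Ppos[of "q-1"] by (simp add: ln_mult)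
  have lnal2: "ln alpha \<le> -1/(real q - 2) * p"
    using alpha_le alpha0 Ppos[of "q-1"] unfolding p_def by (subst (asm) ln_le_cancel_iff[symmetric]) auto
  have key: "- A \<le> ln alpha"
  proof -
    have n1: "real q - 2 > 0" using q3 by simp
    have "p / (real q - 2) \<le> (A + p) / (real q - 1)" using lnal lnal2 by simp
    hence "p * (real q - 1) \<le> (A + p) * (real q - 2)" using n1 by (simp add: divide_simps)
    hence "p \<le> (real q - 2) * A" by (simp add: algebra_simps)
    hence "A + p \<le> (real q - 1) * A" by (simp add: algebra_simps)
    hence "(A + p) / (real q - 1) \<le> A" using n1 by (simp add: divide_simps mult.commute)
    thus ?thesis using lnal by simp
  qed
  have inva: "1 / a \<le> alpha"
  proof -
    have "ln (1/a) \<le> ln alpha" using key a0 unfolding A_def by (simp add: ln_div)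
    thus ?thesis using a0 alpha0 by simp
  qed
  have part1: "\<forall>i\<in>{d-q+1..d}. 1 / lam i \<le> alpha"
  proof
    fix i assume i: "i \<in> {d-q+1..d}"
    have "a \<le> lam i" unfolding a_def using i by (intro mono) auto
    hence "1 / lam i \<le> 1 / a" using a0 by (simp add: frac_le)
    thus "1 / lam i \<le> alpha" using inva by simp
  qed
  have part2: "\<forall>i\<in>{3..d-k+2}. (\<Prod>j\<in>{d-i+2..d}. lam j) powr ((real q - real i + 1) / (real i - 2))
              \<le> (\<Prod>j\<in>{d-q+1..d-i+1}. lam j)"
  proof
    fix i assume i: "i \<in> {3..d-k+2}"
    hence iq: "i \<le> q" and i3: "i \<ge> 3" using assms(10) by auto
    define G where "G = (\<Prod>j\<in>{d-i+2..d}. lam j)"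
    define Q where "Q = (\<Prod>j\<in>{d-q+1..d-i+1}. lam j)"
    have G0: "G > 0" unfolding G_def by (rule prod_pos) (auto intro!: pos)
    have Q0: "Q > 0" unfolding Q_def using qd i3 d2 by (intro prod_pos) (auto intro!: pos)
    have split: "{d-q+1..d} = {d-q+1..d-i+1} \<union> {d-i+2..d}" using iq i3 qd by auto
    have "P q = Q * G" unfolding P_def Q_def G_def split
      by (rule prod.union_disjoint) auto
    hence lnP: "ln (P q) = ln Q + ln G" using Q0 G0 by (simp add: ln_mult)
    have cardQ: "card {d-q+1..d-i+1} = q - i + 1" using iq i3 qd by auto
    have "real (card {d-q+1..d-i+1}) * (- ln alpha) \<le> (\<Sum>j\<in>{d-q+1..d-i+1}. ln (lam j))"
    proof (rule sum_bounded_below)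
      fix j assume j: "j \<in> {d-q+1..d-i+1}"
      hence "1 / lam j \<le> alpha" using part1 i3 d2 by auto
      moreover have "lam j > 0" using j i3 qd d2 by (intro pos) auto
      ultimately have "ln (1 / lam j) \<le> ln alpha" using alpha0 by simp
      thus "- ln alpha \<le> ln (lam j)" using \<open>lam j > 0\<close> by (simp add: ln_div)
    qed
    also have "\<dots> = ln Q" unfolding Q_def using i3 qd d2
      proof (subst ln_prod)
      show "lam j \<noteq> 0" if "j \<in> {d-q+1..d-i+1}" for j
      proof -
        have "1 \<le> j" "j \<le> d" using that i3 qd d2 by (simp_all, arith)
        thus ?thesis using pos[of j] by simp
      qed
    qed auto
    finally have lnQ0: "real (card {d-q+1..d-i+1}) * (- ln alpha) \<le> ln Q" .
    have cr: "real (card {d-q+1..d-i+1}) = real q - real i + 1" unfolding cardQ using iq by (simp add: of_nat_diff)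
    have lnQ: "(real q - real i + 1) * (- ln alpha) \<le> ln Q" using lnQ0 unfolding cr .
    have lnal': "- ln alpha = ln (P q) / (real q - 1)" using alpha_eq Ppos[of q] by simp
    have n1: "real q - 1 > 0" "real i - 2 > 0" using q3 i3 by auto
    have "(real q - real i + 1) * ln (P q) \<le> (real q - 1) * ln Q"
      using lnQ unfolding lnal' using n1 by (simp add: divide_simps mult.commute)
    hence "(real q - real i + 1) * ln G \<le> (real i - 2) * ln Q"
      unfolding lnP by (simp add: algebra_simps)
    hence "(real q - real i + 1) / (real i - 2) * ln G \<le> ln Q"
      using n1 by (simp add: divide_simps mult.commute)
    hence h: "ln (G powr ((real q - real i + 1) / (real i - 2))) \<le> ln Q" by simp
    have gp: "G powr ((real q - real i + 1) / (real i - 2)) > 0" using G0 by simp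
    have "G powr ((real q - real i + 1) / (real i - 2)) \<le> Q"
      using ln_le_cancel_iff[OF gp Q0] h by blast
    thus "(\<Prod>j\<in>{d-i+2..d}. lam j) powr ((real q - real i + 1) / (real i - 2))
              \<le> (\<Prod>j\<in>{d-q+1..d-i+1}. lam j)" unfolding G_def Q_def .
  qed
  show ?thesis using part1 part2 by blast
qed

end
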